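(* Let $\mathbb I=(0,1]\cap\mathbb Q$, canonically arranged as below. Then $\sigma(\mathbb I)=(\Phi(n))_{n\in\mathbb N}$, where $\Phi(n)=\sum_{i=1}^n\varphi(i)$ and $\varphi$ is Euler's totient function; moreover $\sigma(\mathbb I)\approx_\mathcal F\alpha^2$, and more precisely $$\tfrac{3}{10}\,\alpha^2<_\mathcal F\sigma(\mathbb I)<_\mathcal F\frac{\alpha^2-\alpha}{2}.$$
   Context: $\mathbb N=\{1,2,\dots\}$. Each $x\in\mathbb I$ is represented uniquely as the pair $(k,m)\in\mathbb N\times\mathbb N$ with $x=k/m$, $\gcd(k,m)=1$, $k\le m$. $\mathbb N\times\mathbb N$ is arranged with $n$-th component $\{(i,j):\max\{i,j\}=n\}$, and $\mathbb I$ inherits the arrangement, so its $n$-th component is $\mathbb I_n=\{(k,n): \gcd(k,n)=1,\ k\le n\}$. The size sequence is $\sigma(\mathbb I)=(\sigma_n(\mathbb I))_n$, $\sigma_n(\mathbb I)=|\mathbb I_1|+\dots+|\mathbb I_n|$. $\alpha=(n)_n$; operations on sequences are componentwise, rational constants are identified with constant sequences. $(a_n)<_\mathcal F(b_n)$ iff $a_n<b_n$ for all sufficiently large $n$; $(a_n)\ge_\mathcal F(b_n)$ analogously; $(a_n)\approx_\mathcal F(b_n)$ iff some $k\in\mathbb N$ has $k(a_n)\ge_\mathcal F(b_n)$ and some $k$ has $k(b_n)\ge_\mathcal F(a_n)$. *)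

theory Defs
  imports Complex_Main "HOL-Number_Theory.Number_Theory"
begin

definition unitQ :: "rat set" where
  "unitQ = {x. 0 < x \<and> x \<le> 1}"

text \<open>Canonical representation of a positive rational as the pair (k,m) with
  x = k/m, gcd k m = 1 (quotient_of gives the reduced fraction with positive denominator).\<close>
definition rep :: "rat \<Rightarrow> nat \<times> nat" where
  "rep x = (nat (fst (quotient_of x)), nat (snd (quotient_of x)))"

text \<open>n-th component of N x N: pairs with max i j = n; I inherits it.\<close>
definition comp_I :: "nat \<Rightarrow> (nat \<times> nat) set" where
  "comp_I n = {p \<in> rep ` unitQ. max (fst p) (snd p) = n}"

definition sigmaI :: "nat \<Rightarrow> nat" where
  "sigmaI n = (\<Sum>i=1..n. card (comp_I i))"

definition lessF :: "(nat \<Rightarrow> real) \<Rightarrow> (nat \<Rightarrow> real) \<Rightarrow> bool" where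
  "lessF a b \<longleftrightarrow> (\<forall>\<^sub>F n in sequentially. a n < b n)"

definition geF :: "(nat \<Rightarrow> real) \<Rightarrow> (nat \<Rightarrow> real) \<Rightarrow> bool" where
  "geF a b \<longleftrightarrow> (\<forall>\<^sub>F n in sequentially. a n \<ge> b n)"

definition approxF :: "(nat \<Rightarrow> real) \<Rightarrow> (nat \<Rightarrow> real) \<Rightarrow> bool" where
  "approxF a b \<longleftrightarrow> (\<exists>k::nat. k \<ge> 1 \<and> geF (\<lambda>n. real k * a n) b)
                   \<and> (\<exists>k::nat. k \<ge> 1 \<and> geF (\<lambda>n. real k * b n) a)"

end

theory Submission
  imports Defs
begin

lemma rep_unitQ: "rep ` unitQ = {(k,m). 0 < k \<and> k \<le> m \<and> coprime k m}"
proof (intro equalityI subsetI)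
  fix p assume "p \<in> rep ` unitQ"
  then obtain x where x: "x \<in> unitQ" "p = rep x" by auto
  obtain a b where q: "quotient_of x = (a,b)" by force
  have b: "b > 0" using quotient_of_denom_pos[OF q] .
  have c: "coprime a b" using quotient_of_coprime[OF q] .
  have xd: "x = of_int a / of_int b" using quotient_of_div[OF q] .
  from x(1) have "0 < x" "x \<le> 1" by (auto simp: unitQ_def)
  with xd b have ab: "0 < a" "a \<le> b"
    by (auto simp: zero_less_divide_iff divide_le_eq)
  have "coprime (nat a) (nat b)" using c ab b
    by (metis coprime_int_iff int_nat_eq less_imp_le)
  then show "p \<in> {(k,m). 0 < k \<and> k \<le> m \<and> coprime k m}"
    using x(2) q ab by (auto simp: rep_def)
next
  fix p :: "nat \<times> nat" assume "p \<in> {(k,m). 0 < k \<and> k \<le> m \<and> coprime k m}"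
  then obtain k m :: nat where p: "p = (k,m)" "0 < k" "k \<le> m" "coprime k m" by auto
  define x where "x = Fract (int k) (int m)"
  have "coprime (int k) (int m)" using p by simp
  then have q: "quotient_of x = (int k, int m)" using p
    by (simp add: x_def quotient_of_Fract normalize_def)
  have xd: "x = of_int (int k) / of_int (int m)" using quotient_of_div[OF q] .
  have "x \<in> unitQ" using p by (simp add: xd unitQ_def)
  moreover have "rep x = p" using q p by (simp add: rep_def)
  ultimately show "p \<in> rep ` unitQ" by force
qed

lemma comp_I_eq: "comp_I i = (\<lambda>k. (k,i)) ` totatives i"
  by (auto simp: comp_I_def rep_unitQ totatives_def max_def)

lemma card_comp_I: "card (comp_I i) = totient i"
  unfolding comp_I_eq totient_def
  by (subst card_image) (auto simp: inj_on_def)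

lemma part1: "sigmaI n = (\<Sum>i=1..n. totient i)"
  by (simp add: sigmaI_def card_comp_I)

definition G :: "nat list \<Rightarrow> nat \<Rightarrow> (nat \<times> nat) set" where
  "G S n = {(a,b). a \<in> {1..n} \<and> b \<in> {1..n} \<and> (\<forall>p\<in>set S. \<not>(p dvd a \<and> p dvd b))}"

lemma G_finite: "finite (G S n)"
  by (rule finite_subset[of _ "{1..n} \<times> {1..n}"]) (auto simp: G_def)

lemma G_Nil: "card (G [] n) = n^2"
proof -
  have "G [] n = {1..n} \<times> {1..n}" by (auto simp: G_def)
  then show ?thesis by (simp add: power2_eq_square)
qed

lemma G_mult:
  assumes p: "prime p" and S: "\<forall>q\<in>set S. prime q \<and> q \<noteq> p"
  shows "{x\<in>G S n. p dvd fst x \<and> p dvd snd x} = (\<lambda>(x,y). (p*x,p*y)) ` G S (n div p)"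
proof (intro equalityI subsetI)
  fix z assume z: "z \<in> {x\<in>G S n. p dvd fst x \<and> p dvd snd x}"
  then obtain a b where ab: "z = (a,b)" "a \<in> {1..n}" "b \<in> {1..n}" "p dvd a" "p dvd b"
    "\<forall>q\<in>set S. \<not>(q dvd a \<and> q dvd b)" by (auto simp: G_def)
  obtain x where x: "a = p * x" using ab(4) by (auto elim: dvdE)
  obtain y where y: "b = p * y" using ab(5) by (auto elim: dvdE)
  have pp: "p > 0" using p prime_gt_0_nat by blast
  have "x \<ge> 1" "y \<ge> 1" using ab x y by (auto intro: Suc_leI simp: gr0_conv_Suc)
  moreover have "x \<le> n div p" "y \<le> n div p" using ab x y pp
    by (auto simp: less_eq_div_iff_mult_less_eq mult.commute)
  moreover have "\<forall>q\<in>set S. \<not>(q dvd x \<and> q dvd y)" using ab(6) x y by auto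
  ultimately have "(x,y) \<in> G S (n div p)" by (auto simp: G_def)
  then show "z \<in> (\<lambda>(x,y). (p*x,p*y)) ` G S (n div p)" using ab x y by force
next
  fix z assume "z \<in> (\<lambda>(x,y). (p*x,p*y)) ` G S (n div p)"
  then obtain x y where z: "z = (p*x, p*y)" "(x,y) \<in> G S (n div p)" by auto
  have pp: "p > 0" using p prime_gt_0_nat by blast
  have r: "x \<ge> 1" "y \<ge> 1" "x \<le> n div p" "y \<le> n div p"
    "\<forall>q\<in>set S. \<not>(q dvd x \<and> q dvd y)" using z(2) by (auto simp: G_def)
  have "p * x \<le> n" "p * y \<le> n" using r pp
    by (auto simp: less_eq_div_iff_mult_less_eq mult.commute)
  moreover have "p * x \<ge> 1" "p * y \<ge> 1" using r pp by auto
  moreover have "\<forall>q\<in>set S. \<not>(q dvd p*x \<and> q dvd p*y)"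
  proof
    fix q assume q: "q \<in> set S"
    have "\<not> q dvd p" using S q p by (metis primes_dvd_imp_eq)
    then show "\<not>(q dvd p*x \<and> q dvd p*y)" using r(5) q S
      by (metis prime_dvd_mult_iff)
  qed
  ultimately show "z \<in> {x\<in>G S n. p dvd fst x \<and> p dvd snd x}" using z by (auto simp: G_def)
qed

lemma G_rec:
  assumes p: "prime p" and S: "\<forall>q\<in>set S. prime q \<and> q \<noteq> p"
  shows "card (G (p#S) n) + card (G S (n div p)) = card (G S n)"
proof -
  have pp: "p > 0" using p prime_gt_0_nat by blast
  have e: "G S n = G (p#S) n \<union> {x\<in>G S n. p dvd fst x \<and> p dvd snd x}"
    by (auto simp: G_def)
  have "card (G S n) = card (G (p#S) n) + card {x\<in>G S n. p dvd fst x \<and> p dvd snd x}"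
  proof (subst e, rule card_Un_disjoint)
    show "finite (G (p#S) n)" by (rule G_finite)
    show "finite {x\<in>G S n. p dvd fst x \<and> p dvd snd x}" by (rule finite_subset[OF _ G_finite[of S n]]) auto
  qed (auto simp: G_def)
  also have "card {x\<in>G S n. p dvd fst x \<and> p dvd snd x} = card (G S (n div p))"
    unfolding G_mult[OF p S] using pp by (subst card_image) (auto simp: inj_on_def)
  finally show ?thesis by simp
qed

fun cS :: "nat list \<Rightarrow> real" where
  "cS [] = 1" | "cS (p#S) = cS S * (1 - 1 / (real p)^2)"
fun eS :: "nat list \<Rightarrow> real" where
  "eS [] = 0" | "eS (p#S) = 2 * eS S + 1"

lemma eS_nonneg: "eS S \<ge> 0" by (induction S) auto

lemma G_bounds:
  assumes "distinct S" "\<forall>q\<in>set S. prime q"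
  shows "0 \<le> cS S \<and> cS S \<le> 1 \<and> (\<forall>n. real (card (G S n)) \<ge> cS S * (real n)^2 - eS S * real n
      \<and> real (card (G S n)) \<le> cS S * (real n)^2 + eS S * real n)"
  using assms
proof (induction S)
  case Nil then show ?case by (simp add: G_Nil)
next
  case (Cons p S)
  let ?c = "cS S" and ?e = "eS S"
  have p: "prime p" and S: "\<forall>q\<in>set S. prime q \<and> q \<noteq> p" using Cons.prems by auto
  have IH: "0 \<le> ?c" "?c \<le> 1" "\<And>n. real (card (G S n)) \<ge> ?c * (real n)^2 - ?e * real n"
      "\<And>n. real (card (G S n)) \<le> ?c * (real n)^2 + ?e * real n"
    using Cons by auto
  have p2: "real p \<ge> 2" using prime_ge_2_nat[OF p] by simp
  have e0: "?e \<ge> 0" by (rule eS_nonneg)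
  have p4: "(real p)^2 \<ge> 4" using power_mono[OF p2, of 2] by simp
  have f: "0 \<le> 1 - 1 / (real p)^2" "1 - 1 / (real p)^2 \<le> 1" using p4
    by (auto simp: divide_le_eq_1)
  have c1: "0 \<le> cS (p#S)" "cS (p#S) \<le> 1" using IH(1,2) f
    by (auto intro: mult_nonneg_nonneg mult_le_one)
  have bnds: "real (card (G (p#S) n)) \<ge> cS (p#S) * (real n)^2 - eS (p#S) * real n
      \<and> real (card (G (p#S) n)) \<le> cS (p#S) * (real n)^2 + eS (p#S) * real n" for n
  proof -
    define x where "x = real n"
    define y where "y = real (n div p)"
    have rec: "real (card (G (p#S) n)) = real (card (G S n)) - real (card (G S (n div p)))"
      using G_rec[OF p S, of n] by linarith
    have x0: "x \<ge> 0" "y \<ge> 0" by (auto simp: x_def y_def)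
    have yx: "y \<le> x / real p"
    proof -
      have "(n div p) * p \<le> n" by (rule div_times_less_eq_dividend)
      then have "y * real p \<le> x" unfolding x_def y_def by (metis of_nat_le_iff of_nat_mult)
      then show ?thesis using p2 by (simp add: field_simps)
    qed
    have yx2: "y \<ge> x / real p - 1"
    proof -
      have "n < p * (n div p) + p" using p2
        by (metis add.commute div_mult_mod_eq mod_less_divisor mult.commute nat_add_left_cancel_less
            of_nat_0_less_iff order_less_le_trans zero_less_numeral)
      then have "real n < real p * y + real p" unfolding y_def
        by (metis of_nat_add of_nat_less_iff of_nat_mult)
      then show ?thesis using p2 by (simp add: x_def field_simps)
    qed
    have ysq_le: "y^2 \<le> x^2 / (real p)^2"
      using power_mono[OF yx x0(2), of 2] by (simp add: power_divide)
    have ysq_ge: "y^2 \<ge> x^2 / (real p)^2 - 2 * x / real p"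
    proof (cases "x / real p \<ge> 1")
      case True
      then have "(x / real p - 1)^2 \<le> y^2" using power_mono[OF yx2] by simp
      then show ?thesis by (simp add: power2_diff power_divide)
    next
      case False
      have t: "0 \<le> x / real p" using x0 p2 by simp
      have "x^2 / (real p)^2 - 2 * x / real p = (x / real p) * (x / real p - 2)"
        by (simp add: power2_eq_square power_divide algebra_simps)
      also have "\<dots> \<le> 0" using t False by (intro mult_nonneg_nonpos) auto
      finally have "x^2 / (real p)^2 - 2 * x / real p \<le> 0" .
      then show ?thesis by (smt (verit) zero_le_power2)
    qed
    have yp: "y * real p \<le> x"
    proof -
      have "(n div p) * p \<le> n" by (rule div_times_less_eq_dividend)
      then show ?thesis unfolding x_def y_def by (metis of_nat_le_iff of_nat_mult)
    qed
    have "y * 1 \<le> y * real p" using p2 x0 by (intro mult_left_mono) auto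
    then have yx': "y \<le> x" using yp by simp
    have ey: "?e * y \<le> ?e * x" using yx' e0 by (rule mult_left_mono)
    have eSp: "eS (p#S) * x = 2 * (?e * x) + x" by (simp add: algebra_simps)
    have cx: "?c * x^2 - ?c * (x^2 / (real p)^2) = cS (p#S) * x^2" by (simp add: algebra_simps)
    have A: "real (card (G (p#S) n)) \<ge> ?c * x^2 - ?e * x - (?c * y^2 + ?e * y)"
      using rec IH(3)[of n] IH(4)[of "n div p"] by (simp add: x_def y_def)
    have B: "?c * y^2 \<le> ?c * (x^2 / (real p)^2)" using ysq_le IH(1) by (rule mult_left_mono)
    have lo: "real (card (G (p#S) n)) \<ge> cS (p#S) * x^2 - eS (p#S) * x"
      using A B cx ey x0 eSp e0 by linarith
    have C: "real (card (G (p#S) n)) \<le> ?c * x^2 + ?e * x - (?c * y^2 - ?e * y)"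
      using rec IH(4)[of n] IH(3)[of "n div p"] by (simp add: x_def y_def)
    have D: "?c * y^2 \<ge> ?c * (x^2 / (real p)^2 - 2 * x / real p)" using ysq_ge IH(1) by (rule mult_left_mono)
    have D': "?c * (x^2 / (real p)^2 - 2 * x / real p) = ?c * (x^2 / (real p)^2) - ?c * (2 * x / real p)"
      by (simp add: right_diff_distrib)
    have "x * 2 \<le> x * real p" using p2 x0 by (intro mult_left_mono) auto
    then have E0: "2 * x / real p \<le> x" using p2 by (simp add: divide_le_eq mult.commute)
    have "?c * (2 * x / real p) \<le> 1 * (2 * x / real p)" using IH(2) x0 p2 by (intro mult_right_mono) auto
    then have E: "?c * (2 * x / real p) \<le> x" using E0 by simp
    have hi: "real (card (G (p#S) n)) \<le> cS (p#S) * x^2 + eS (p#S) * x"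
      using C D D' E cx ey eSp by linarith
    show ?thesis using lo hi by (simp add: x_def)
  qed
  show ?case using c1 bnds by blast
qed

definition Cop :: "nat \<Rightarrow> (nat \<times> nat) set" where
  "Cop n = {(a,b). a \<in> {1..n} \<and> b \<in> {1..n} \<and> coprime a b}"

lemma Cop_finite: "finite (Cop n)"
  by (rule finite_subset[of _ "{1..n} \<times> {1..n}"]) (auto simp: Cop_def)

lemma card_Cop: assumes "n \<ge> 1" shows "card (Cop n) + 1 = 2 * (\<Sum>i=1..n. totient i)"
proof -
  define L where "L = {(a,b). (a,b) \<in> Cop n \<and> a \<le> b}"
  define U where "U = {(a,b). (a,b) \<in> Cop n \<and> b \<le> a}"
  have LU: "Cop n = L \<union> U" by (auto simp: L_def U_def)
  have LI: "L \<inter> U = {(1,1)}" using assms by (auto simp: L_def U_def Cop_def)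
  have fL: "finite L" "finite U" unfolding L_def U_def by (auto intro: finite_subset[OF _ Cop_finite[of n]])
  have Leq: "L = (\<lambda>(b,a). (a,b)) ` (SIGMA b:{1..n}. totatives b)"
    by (auto simp: L_def Cop_def totatives_def image_iff)
  have "card L = card (SIGMA b:{1..n}. totatives b)"
    unfolding Leq by (rule card_image) (auto simp: inj_on_def)
  also have "\<dots> = (\<Sum>i=1..n. totient i)" by (simp add: card_SigmaI totient_def)
  finally have cL: "card L = (\<Sum>i=1..n. totient i)" .
  have "U = (\<lambda>(a,b). (b,a)) ` L" unfolding L_def U_def Cop_def by (auto simp: image_iff coprime_commute)
  moreover have "inj_on (\<lambda>(a,b). (b,a)) L" by (auto simp: inj_on_def)
  ultimately have "card U = card L" by (simp add: card_image)
  have "card L + card U = card (L \<union> U) + card (L \<inter> U)" using fL by (rule card_Un_Int)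
  then show ?thesis using LU LI cL \<open>card U = card L\<close> by simp
qed

lemma Cop_sub_G: assumes S: "\<forall>q\<in>set S. prime q" shows "Cop n \<subseteq> G S n"
proof
  fix z assume "z \<in> Cop n"
  then obtain a b where ab: "z = (a,b)" "a \<in> {1..n}" "b \<in> {1..n}" "coprime a b"
    unfolding Cop_def by blast
  have "\<not>(p dvd a \<and> p dvd b)" if p: "p \<in> set S" for p
  proof
    assume "p dvd a \<and> p dvd b"
    then have "p = 1" using coprime_common_divisor_nat[OF ab(4)] by blast
    then show False using S p by auto
  qed
  then show "z \<in> G S n" using ab unfolding G_def by blast
qed

definition S67 :: "nat list" where
  "S67 = [2,3,5,7,11,13,17,19,23,29,31,37,41,43,47,53,59,61,67]"

lemma S67_all: "\<forall>q::nat. q \<le> 67 \<longrightarrow> prime q \<longrightarrow> q \<in> set S67"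
  unfolding S67_def by code_simp

lemma S67_prime: "\<forall>q\<in>set S67. prime q"
  unfolding S67_def by code_simp

lemma S67_distinct: "distinct S67"
  unfolding S67_def by simp

lemma S67_c: "cS S67 \<ge> 0.6095"
  unfolding S67_def by simp

definition Q :: "nat \<Rightarrow> nat set" where
  "Q n = {q. prime q \<and> 67 < q \<and> q \<le> n}"

definition D :: "nat \<Rightarrow> nat \<Rightarrow> (nat \<times> nat) set" where
  "D q n = {x\<in>G [] n. q dvd fst x \<and> q dvd snd x}"

lemma card_D: "prime q \<Longrightarrow> card (D q n) = (n div q)^2"
proof -
  assume q: "prime q"
  have qp: "q > 0" using q prime_gt_0_nat by blast
  have eq: "D q n = (\<lambda>(x,y). (q*x,q*y)) ` G [] (n div q)"
    unfolding D_def by (rule G_mult[OF q]) simp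
  have inj: "inj_on (\<lambda>(x,y). (q*x,q*y)) (G [] (n div q))"
    using qp by (auto simp: inj_on_def)
  have "card (D q n) = card (G [] (n div q))" unfolding eq using inj by (rule card_image)
  then show ?thesis by (simp add: G_Nil)
qed

lemma G_sub: "G S67 n \<subseteq> Cop n \<union> (\<Union>q\<in>Q n. D q n)"
proof
  fix z assume z: "z \<in> G S67 n"
  then obtain a b where ab: "z = (a,b)" "a \<in> {1..n}" "b \<in> {1..n}"
    "\<forall>p\<in>set S67. \<not>(p dvd a \<and> p dvd b)" unfolding G_def by blast
  show "z \<in> Cop n \<union> (\<Union>q\<in>Q n. D q n)"
  proof (cases "coprime a b")
    case True
    then have "z \<in> Cop n" using ab unfolding Cop_def by blast
    then show ?thesis by (rule UnI1)
  next
    case False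
    then have "gcd a b \<noteq> 1" by (simp only: coprime_iff_gcd_eq_1 not_False_eq_True)
    from prime_factor_nat[OF this] obtain q where q: "prime q" "q dvd gcd a b" by blast
    then have qa: "q dvd a" "q dvd b" by simp_all
    have nS: "q \<notin> set S67"
    proof
      assume "q \<in> set S67"
      from ab(4) this have "\<not>(q dvd a \<and> q dvd b)" by (rule bspec)
      then show False using qa by simp
    qed
    have "67 < q"
    proof (rule ccontr)
      assume "\<not> 67 < q"
      then have "q \<le> 67" by simp
      then have "q \<in> set S67" using S67_all q(1) by simp
      then show False using nS by simp
    qed
    moreover have "q \<le> a" using dvd_imp_le[OF qa(1)] ab(2) by simp
    then have "q \<le> n" using ab(2) by simp
    ultimately have "q \<in> Q n" using q(1) unfolding Q_def by simp
    moreover have "z \<in> D q n"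
    proof -
      have "z \<in> G [] n" using ab unfolding G_def by simp
      then show ?thesis using ab(1) qa unfolding D_def by simp
    qed
    ultimately show ?thesis by blast
  qed
qed

lemma tele: "(\<Sum>k<N. 1 / (real (69 + 2*k))^2) \<le> 1/136 - 1 / (2 * real (68 + 2*N))"
proof (induction N)
  case 0 then show ?case by simp
next
  case (Suc N)
  define m where "m = real (69 + 2*N)"
  have m: "m \<ge> 69" by (simp add: m_def)
  have "1 / m^2 \<le> 1 / (2 * (m - 1)) - 1 / (2 * (m + 1))"
  proof -
  have a: "m - 1 > 0" "m + 1 > 0" using m by auto
  have "1 / (2 * (m - 1)) - 1 / (2 * (m + 1)) = 1 / ((m - 1) * (m + 1))"
    using a by (simp add: divide_simps) (simp add: algebra_simps)
  also have "(m - 1) * (m + 1) = m^2 - 1" by (simp add: algebra_simps power2_eq_square)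
  also have "1 / m^2 \<le> 1 / (m^2 - 1)"
  proof -
    have p: "m^2 - 1 > 0" using power_mono[OF m, of 2] by simp
    have "m^2 > 0" using m by simp
    then show ?thesis using p by (intro divide_left_mono) (auto intro: mult_pos_pos)
  qed
  finally show ?thesis by simp
  qed
  moreover have "real (68 + 2*N) = m - 1" "real (68 + 2 * Suc N) = m + 1" by (simp_all add: m_def)
  ultimately show ?case using Suc.IH by (simp add: m_def)
qed

lemma tail: "(\<Sum>q\<in>Q n. real ((n div q)^2)) \<le> (real n)^2 / 136"
proof -
  define f where "f = (\<lambda>k::nat. 69 + 2*k)"
  have fin: "finite (f ` {..<n})" by simp
  have sub: "Q n \<subseteq> f ` {..<n}"
  proof
    fix q assume "q \<in> Q n"
    then have q: "prime q" "67 < q" "q \<le> n" by (auto simp: Q_def)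
    have "odd q" using prime_odd_nat[OF q(1)] q(2) by simp
    then obtain k where k: "q = 2*k+1" by (auto elim: oddE)
    have "q = f (k - 34)" using k q(2) by (simp add: f_def)
    moreover have "k - 34 < n" using k q by simp
    ultimately show "q \<in> f ` {..<n}" by blast
  qed
  have trm: "real ((n div q)^2) \<le> (real n)^2 * (1 / (real q)^2)" if "q > 0" for q
  proof -
    have "real (n div q) * real q \<le> real n"
      by (metis div_times_less_eq_dividend of_nat_le_iff of_nat_mult)
    then have "real (n div q) \<le> real n / real q" using that by (simp add: field_simps)
    then have "(real (n div q))^2 \<le> (real n / real q)^2" by (intro power_mono) auto
    then show ?thesis by (simp add: power_divide)
  qed
  have "(\<Sum>q\<in>Q n. real ((n div q)^2)) \<le> (\<Sum>q\<in>Q n. (real n)^2 * (1 / (real q)^2))"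
    by (intro sum_mono trm) (auto simp: Q_def)
  also have "\<dots> \<le> (\<Sum>q\<in>f ` {..<n}. (real n)^2 * (1 / (real q)^2))"
    by (intro sum_mono2 fin sub) auto
  also have "\<dots> = (real n)^2 * (\<Sum>k<n. 1 / (real (69 + 2*k))^2)"
    by (subst sum.reindex) (auto simp: inj_on_def f_def sum_distrib_left)
  also have "\<dots> \<le> (real n)^2 * (1/136)"
  proof -
    have "0 \<le> 1 / (2 * real (68 + 2*n))" by simp
    then have "(\<Sum>k<n. 1 / (real (69 + 2*k))^2) \<le> 1/136" using tele[of n] by linarith
    then show ?thesis by (intro mult_left_mono) auto
  qed
  finally show ?thesis by simp
qed

lemma lower_main: "real (2 * (\<Sum>i=1..n. totient i)) \<ge> 0.6095 * (real n)^2 - eS S67 * real n - (real n)^2 / 136"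
proof (cases "n = 0")
  case True then show ?thesis by simp
next
  case False
  have "card (G S67 n) \<le> card (Cop n \<union> (\<Union>q\<in>Q n. D q n))"
    by (rule card_mono[OF _ G_sub]) (auto simp: D_def Q_def intro: Cop_finite finite_subset[OF _ G_finite])
  also have "\<dots> \<le> card (Cop n) + card (\<Union>q\<in>Q n. D q n)" by (rule card_Un_le)
  also have "card (\<Union>q\<in>Q n. D q n) \<le> (\<Sum>q\<in>Q n. card (D q n))" by (rule card_UN_le) (simp add: Q_def)
  also have "(\<Sum>q\<in>Q n. card (D q n)) = (\<Sum>q\<in>Q n. (n div q)^2)"
    by (rule sum.cong) (auto simp: Q_def card_D)
  finally have "real (card (G S67 n)) \<le> real (card (Cop n)) + real (\<Sum>q\<in>Q n. (n div q)^2)"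
    by linarith
  also have "real (\<Sum>q\<in>Q n. (n div q)^2) = (\<Sum>q\<in>Q n. real ((n div q)^2))" by simp
  finally have A: "real (card (G S67 n)) \<le> real (card (Cop n)) + (real n)^2 / 136" using tail[of n] by linarith
  have B: "real (card (G S67 n)) \<ge> cS S67 * (real n)^2 - eS S67 * real n"
    using G_bounds[OF S67_distinct S67_prime] by blast
  have C: "cS S67 * (real n)^2 \<ge> 0.6095 * (real n)^2" using S67_c by (intro mult_right_mono) auto
  have "card (Cop n) + 1 = 2 * (\<Sum>i=1..n. totient i)" using False card_Cop by simp
  then have "real (card (Cop n)) \<le> real (2 * (\<Sum>i=1..n. totient i))" by linarith
  then show ?thesis using A B C by linarith
qed

lemma upper_main: assumes "n \<ge> 6" shows "2 * (\<Sum>i=1..n. totient i) + n < n^2"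
proof -
  have p2: "prime (2::nat)" by simp
  have "card (G [2] n) + card (G [] (n div 2)) = card (G [] n)" using G_rec[OF p2, of "[]"] by simp
  then have g: "card (G [2] n) + (n div 2)^2 = n^2" by (simp add: G_Nil)
  have "card (Cop n) \<le> card (G [2] n)" by (rule card_mono[OF G_finite Cop_sub_G]) simp
  moreover have "card (Cop n) + 1 = 2 * (\<Sum>i=1..n. totient i)" using assms card_Cop by simp
  moreover have "(n div 2)^2 > n + 1"
  proof -
    define d where "d = n div 2"
    have d3: "d \<ge> 3" using assms by (simp add: d_def)
    have "n \<le> 2*d + 1" by (simp add: d_def)
    moreover have "d * 3 \<le> d * d" using d3 by (intro mult_left_mono) auto
    ultimately have "n + 1 < d * d" using d3 by linarith
    then show ?thesis by (simp add: d_def power2_eq_square)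
  qed
  ultimately show ?thesis using g by linarith
qed

theorem theorem10:
  shows "(\<forall>n. sigmaI n = (\<Sum>i=1..n. totient i))
    \<and> approxF (\<lambda>n. real (sigmaI n)) (\<lambda>n. (real n)^2)
    \<and> lessF (\<lambda>n. 3/10 * (real n)^2) (\<lambda>n. real (sigmaI n))
    \<and> lessF (\<lambda>n. real (sigmaI n)) (\<lambda>n. ((real n)^2 - real n) / 2)"
proof -
  have lo: "\<forall>\<^sub>F n in sequentially. 3/10 * (real n)^2 < real (sigmaI n)"
  proof -
    define e where "e = eS S67"
    have e0: "e \<ge> 0" by (simp add: e_def eS_nonneg)
    define N where "N = nat \<lceil>500 * e\<rceil> + 1"
    have "3/10 * (real n)^2 < real (sigmaI n)" if n: "n \<ge> N" for n
    proof -
      have n1: "real n > 500 * e" using n unfolding N_def by linarith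
      then have np: "real n > 0" using e0 by linarith
      have "e * real n < (real n / 500) * real n" using n1 np by (intro mult_strict_right_mono) auto
      then have en: "e * real n < (real n)^2 / 500" by (simp add: power2_eq_square)
      have n2: "(real n)^2 > 0" using np by simp
      have "real (2 * (\<Sum>i=1..n. totient i)) \<ge> 0.6095 * (real n)^2 - e * real n - (real n)^2 / 136"
        using lower_main[of n] by (simp add: e_def)
      then have "2 * real (sigmaI n) \<ge> 1219/2000 * (real n)^2 - e * real n - (real n)^2 / 136"
        by (simp add: part1)
      then show ?thesis using en n2 by linarith
    qed
    then show ?thesis unfolding eventually_sequentially by blast
  qed
  have hi: "\<forall>\<^sub>F n in sequentially. real (sigmaI n) < ((real n)^2 - real n) / 2"
  proof -
    have "real (sigmaI n) < ((real n)^2 - real n) / 2" if n: "n \<ge> 6" for n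
    proof -
      have "2 * sigmaI n + n < n^2" using upper_main[OF n] by (simp add: part1)
      then have "real (2 * sigmaI n + n) < real (n^2)" by (metis of_nat_less_iff)
      then show ?thesis by simp
    qed
    then show ?thesis unfolding eventually_sequentially by blast
  qed
  have ap1: "geF (\<lambda>n. real 4 * real (sigmaI n)) (\<lambda>n. (real n)^2)"
    unfolding geF_def
  proof (rule eventually_mono[OF lo])
    fix n assume "3/10 * (real n)^2 < real (sigmaI n)"
    moreover have "(real n)^2 \<ge> 0" by simp
    ultimately show "real 4 * real (sigmaI n) \<ge> (real n)^2" by simp
  qed
  have ap2: "geF (\<lambda>n. real 1 * (real n)^2) (\<lambda>n. real (sigmaI n))"
    unfolding geF_def
  proof (rule eventually_mono[OF hi])
    fix n assume "real (sigmaI n) < ((real n)^2 - real n) / 2"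
    moreover have "(real n)^2 \<ge> 0" "real n \<ge> 0" by simp_all
    moreover have "((real n)^2 - real n) / 2 = (real n)^2 / 2 - real n / 2" by (simp add: diff_divide_distrib)
    ultimately have "real (sigmaI n) \<le> (real n)^2" by linarith
    then show "real 1 * (real n)^2 \<ge> real (sigmaI n)" by (simp only: of_nat_1 mult_1)
  qed
  have "approxF (\<lambda>n. real (sigmaI n)) (\<lambda>n. (real n)^2)"
    unfolding approxF_def using ap1 ap2 by (metis le_refl one_le_numeral)
  then show ?thesis using part1 lo hi by (simp add: lessF_def)
qed

end
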